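(* Let $X,Y$ be countable discrete metric spaces and $d\in D(X,Y)$. Suppose $M_d(X,Y)$ is full as a Hilbert $C^*_u(X)$-module, i.e. the linear span of $\{T^*\circ S: T,S\in M_d(X,Y)\}$ is norm dense in $C^*_u(X)$. Then there exist $L>0$ and a map $f:X\to Y$ such that $d(x,f(x))\le L$ for all $x\in X$.
   Context: $H_X=l^2(X)$ with basis $\{\delta_x\}$. $D(X,Y)$ is the set of metrics on $X\sqcup Y$ restricting to $d_X$ and $d_Y$. For $T:H_X\to H_Y$ bounded, $T_{yx}=\langle T\delta_x,\delta_y\rangle$; $T$ has propagation less than $L$ w.r.t. $d$ if $T_{yx}=0$ whenever $d(x,y)\ge L$. $M_d(X,Y)$ is the norm closure of the bounded finite-propagation operators $H_X\to H_Y$. $C^*_u(X)$ is the norm closure of the bounded operators on $H_X$ of finite propagation w.r.t. $d_X$ (uniform Roe algebra). *)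

theory Defs
  imports "HOL-Analysis.Analysis" "HOL-Library.Countable"
begin

definition is_metric :: "('a \<Rightarrow> 'a \<Rightarrow> real) \<Rightarrow> bool" where
  "is_metric d \<longleftrightarrow>
     (\<forall>x y. 0 \<le> d x y) \<and> (\<forall>x y. d x y = 0 \<longleftrightarrow> x = y) \<and>
     (\<forall>x y. d x y = d y x) \<and> (\<forall>x y z. d x z \<le> d x y + d y z)"

definition is_discrete_metric :: "('a \<Rightarrow> 'a \<Rightarrow> real) \<Rightarrow> bool" where
  "is_discrete_metric d \<longleftrightarrow> is_metric d \<and>
     (\<forall>x. \<exists>e>0. \<forall>y. d x y < e \<longrightarrow> y = x)"

text \<open>The set D(X,Y) of metrics on the disjoint union restricting to dX and dY.\<close>
definition coarse_metrics ::
  "('a \<Rightarrow> 'a \<Rightarrow> real) \<Rightarrow> ('b \<Rightarrow> 'b \<Rightarrow> real) \<Rightarrow> (('a + 'b) \<Rightarrow> ('a + 'b) \<Rightarrow> real) set" where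
  "coarse_metrics dX dY = {d. is_metric d \<and>
     (\<forall>x x'. d (Inl x) (Inl x') = dX x x') \<and> (\<forall>y y'. d (Inr y) (Inr y') = dY y y')}"

definition is_l2 :: "('a \<Rightarrow> complex) \<Rightarrow> bool" where
  "is_l2 v \<longleftrightarrow> (\<lambda>x. (cmod (v x))\<^sup>2) summable_on UNIV"

definition l2norm :: "('a \<Rightarrow> complex) \<Rightarrow> real" where
  "l2norm v = sqrt (\<Sum>\<^sub>\<infinity>x. (cmod (v x))\<^sup>2)"

text \<open>An operator H_X \<rightarrow> H_Y is represented by its matrix T y x = <T delta_x, delta_y>.\<close>
definition mat_apply :: "('b \<Rightarrow> 'a \<Rightarrow> complex) \<Rightarrow> ('a \<Rightarrow> complex) \<Rightarrow> ('b \<Rightarrow> complex)" where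
  "mat_apply T v = (\<lambda>y. \<Sum>\<^sub>\<infinity>x. T y x * v x)"

definition bounded_mat :: "('b \<Rightarrow> 'a \<Rightarrow> complex) \<Rightarrow> bool" where
  "bounded_mat T \<longleftrightarrow> (\<exists>C. \<forall>v. is_l2 v \<longrightarrow>
      (\<forall>y. (\<lambda>x. T y x * v x) summable_on UNIV) \<and>
      is_l2 (mat_apply T v) \<and> l2norm (mat_apply T v) \<le> C * l2norm v)"

definition opnorm :: "('b \<Rightarrow> 'a \<Rightarrow> complex) \<Rightarrow> real" where
  "opnorm T = Sup {l2norm (mat_apply T v) | v. is_l2 v \<and> l2norm v \<le> 1}"

definition mat_diff :: "('b \<Rightarrow> 'a \<Rightarrow> complex) \<Rightarrow> ('b \<Rightarrow> 'a \<Rightarrow> complex) \<Rightarrow> ('b \<Rightarrow> 'a \<Rightarrow> complex)" where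
  "mat_diff T S = (\<lambda>y x. T y x - S y x)"

definition finite_prop :: "('a \<Rightarrow> 'b \<Rightarrow> real) \<Rightarrow> ('b \<Rightarrow> 'a \<Rightarrow> complex) \<Rightarrow> bool" where
  "finite_prop \<rho> T \<longleftrightarrow> (\<exists>L. \<forall>x y. \<rho> x y \<ge> L \<longrightarrow> T y x = 0)"

definition roe_closure :: "('a \<Rightarrow> 'b \<Rightarrow> real) \<Rightarrow> ('b \<Rightarrow> 'a \<Rightarrow> complex) set" where
  "roe_closure \<rho> = {T. bounded_mat T \<and>
      (\<forall>e>0. \<exists>S. bounded_mat S \<and> finite_prop \<rho> S \<and> opnorm (mat_diff T S) < e)}"

definition M_d :: "(('a + 'b) \<Rightarrow> ('a + 'b) \<Rightarrow> real) \<Rightarrow> ('b \<Rightarrow> 'a \<Rightarrow> complex) set" where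
  "M_d d = roe_closure (\<lambda>x y. d (Inl x) (Inr y))"

definition uniform_roe :: "('a \<Rightarrow> 'a \<Rightarrow> real) \<Rightarrow> ('a \<Rightarrow> 'a \<Rightarrow> complex) set" where
  "uniform_roe dX = roe_closure dX"

definition adj_comp :: "('b \<Rightarrow> 'a \<Rightarrow> complex) \<Rightarrow> ('b \<Rightarrow> 'a \<Rightarrow> complex) \<Rightarrow> ('a \<Rightarrow> 'a \<Rightarrow> complex)" where
  "adj_comp T S = (\<lambda>x' x. \<Sum>\<^sub>\<infinity>y. cnj (T y x') * S y x)"

definition inner_span :: "('b \<Rightarrow> 'a \<Rightarrow> complex) set \<Rightarrow> ('a \<Rightarrow> 'a \<Rightarrow> complex) set" where
  "inner_span M = {A. \<exists>n::nat. \<exists>c T S. (\<forall>i<n. T i \<in> M \<and> S i \<in> M) \<and>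
      A = (\<lambda>x' x. \<Sum>i<n. c i * adj_comp (T i) (S i) x' x)}"

definition full_module :: "('a \<Rightarrow> 'a \<Rightarrow> real) \<Rightarrow> ('b \<Rightarrow> 'a \<Rightarrow> complex) set \<Rightarrow> bool" where
  "full_module dX M \<longleftrightarrow> (\<forall>A \<in> uniform_roe dX. \<forall>e>0.
      \<exists>B \<in> inner_span M. opnorm (mat_diff A B) < e)"

end

theory Submission
  imports Defs
begin


lemma l2_finite_le:
  assumes "is_l2 v"
  shows "L2_set (\<lambda>x. cmod (v x)) F \<le> l2norm v"
proof (cases "finite F")
  case True
  have "(\<Sum>x\<in>F. (cmod (v x))\<^sup>2) \<le> (\<Sum>\<^sub>\<infinity>x. (cmod (v x))\<^sup>2)"
    using assms True unfolding is_l2_def by (intro finite_sum_le_infsum) auto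
  then show ?thesis unfolding L2_set_def l2norm_def by simp
next
  case False
  then show ?thesis by (simp add: l2norm_def infsum_nonneg)
qed

lemma l2I:
  assumes "\<And>F. finite F \<Longrightarrow> L2_set (\<lambda>x. cmod (v x)) F \<le> K"
  shows "is_l2 v \<and> l2norm v \<le> K"
proof -
  have K0: "0 \<le> K" using assms[of "{}"] by simp
  have fs: "(\<Sum>x\<in>F. (cmod (v x))\<^sup>2) \<le> K\<^sup>2" if "finite F" for F
  proof -
    have "sqrt (\<Sum>x\<in>F. (cmod (v x))\<^sup>2) \<le> K" using assms[OF that] unfolding L2_set_def .
    moreover have s0: "0 \<le> (\<Sum>x\<in>F. (cmod (v x))\<^sup>2)" by (simp add: sum_nonneg)
    ultimately have "(sqrt (\<Sum>x\<in>F. (cmod (v x))\<^sup>2))\<^sup>2 \<le> K\<^sup>2"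
      by (intro power_mono) auto
    with s0 show ?thesis by simp
  qed
  have s: "is_l2 v" unfolding is_l2_def
    by (rule nonneg_bdd_above_summable_on) (use fs in \<open>auto intro!: bdd_aboveI2\<close>)
  have "(\<Sum>\<^sub>\<infinity>x. (cmod (v x))\<^sup>2) \<le> K\<^sup>2"
    using s unfolding is_l2_def by (intro infsum_le_finite_sums) (use fs in auto)
  then have "l2norm v \<le> sqrt (K\<^sup>2)" unfolding l2norm_def by (rule real_sqrt_le_mono)
  with K0 show ?thesis using s by simp
qed

lemma l2norm_nonneg: "0 \<le> l2norm v"
  unfolding l2norm_def by (simp add: infsum_nonneg)

lemma CS:
  assumes "is_l2 u" "is_l2 v"
  shows "(\<lambda>x. norm (u x * v x)) summable_on UNIV"
    and "(\<Sum>\<^sub>\<infinity>x. cmod (u x * v x)) \<le> l2norm u * l2norm v"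
proof -
  have fs: "(\<Sum>x\<in>F. cmod (u x * v x)) \<le> l2norm u * l2norm v" if "finite F" for F
  proof -
    have "(\<Sum>x\<in>F. cmod (u x * v x)) = (\<Sum>x\<in>F. \<bar>cmod (u x)\<bar> * \<bar>cmod (v x)\<bar>)"
      by (simp add: norm_mult)
    also have "\<dots> \<le> L2_set (\<lambda>x. cmod (u x)) F * L2_set (\<lambda>x. cmod (v x)) F"
      by (rule L2_set_mult_ineq)
    also have "\<dots> \<le> l2norm u * l2norm v"
      using l2_finite_le[OF assms(1)] l2_finite_le[OF assms(2)]
      by (intro mult_mono) (auto simp: l2norm_nonneg)
    finally show ?thesis .
  qed
  show a: "(\<lambda>x. norm (u x * v x)) summable_on UNIV"
    by (rule nonneg_bdd_above_summable_on) (use fs in \<open>auto intro!: bdd_aboveI2\<close>)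
  show "(\<Sum>\<^sub>\<infinity>x. cmod (u x * v x)) \<le> l2norm u * l2norm v"
    using a by (intro infsum_le_finite_sums) (use fs in auto)
qed

lemma CS2:
  assumes "is_l2 u" "is_l2 v"
  shows "(\<lambda>x. u x * v x) summable_on UNIV"
    and "cmod (\<Sum>\<^sub>\<infinity>x. u x * v x) \<le> l2norm u * l2norm v"
proof -
  note c = CS[OF assms]
  show "(\<lambda>x. u x * v x) summable_on UNIV" by (rule abs_summable_summable[OF c(1)])
  show "cmod (\<Sum>\<^sub>\<infinity>x. u x * v x) \<le> l2norm u * l2norm v"
    by (rule order_trans[OF norm_infsum_bound[OF c(1)] c(2)])
qed

lemma l2_add:
  assumes "is_l2 u" "is_l2 v"
  shows "is_l2 (\<lambda>x. u x + v x) \<and> l2norm (\<lambda>x. u x + v x) \<le> l2norm u + l2norm v"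
proof (rule l2I)
  fix F :: "'a set" assume "finite F"
  have "L2_set (\<lambda>x. cmod (u x + v x)) F \<le> L2_set (\<lambda>x. cmod (u x) + cmod (v x)) F"
    by (rule L2_set_mono) (auto simp: norm_triangle_ineq)
  also have "\<dots> \<le> L2_set (\<lambda>x. cmod (u x)) F + L2_set (\<lambda>x. cmod (v x)) F"
    by (rule L2_set_triangle_ineq)
  also have "\<dots> \<le> l2norm u + l2norm v"
    using l2_finite_le[OF assms(1)] l2_finite_le[OF assms(2)] by (intro add_mono)
  finally show "L2_set (\<lambda>x. cmod (u x + v x)) F \<le> l2norm u + l2norm v" .
qed

lemma l2_scale:
  assumes "is_l2 v"
  shows "is_l2 (\<lambda>x. c * v x) \<and> l2norm (\<lambda>x. c * v x) \<le> cmod c * l2norm v"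
proof (rule l2I)
  fix F :: "'a set" assume "finite F"
  have "L2_set (\<lambda>x. cmod (c * v x)) F = cmod c * L2_set (\<lambda>x. cmod (v x)) F"
    by (simp add: norm_mult L2_set_right_distrib)
  also have "\<dots> \<le> cmod c * l2norm v"
    using l2_finite_le[OF assms] by (intro mult_left_mono) auto
  finally show "L2_set (\<lambda>x. cmod (c * v x)) F \<le> cmod c * l2norm v" .
qed

lemma l2_diff:
  assumes "is_l2 u" "is_l2 v"
  shows "is_l2 (\<lambda>x. u x - v x) \<and> l2norm (\<lambda>x. u x - v x) \<le> l2norm u + l2norm v"
proof -
  have "is_l2 (\<lambda>x. (-1) * v x) \<and> l2norm (\<lambda>x. (-1) * v x) \<le> cmod (-1) * l2norm v"
    by (rule l2_scale[OF assms(2)])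
  then have "is_l2 (\<lambda>x. - v x) \<and> l2norm (\<lambda>x. - v x) \<le> l2norm v" by simp
  from l2_add[OF assms(1) conjunct1[OF this]] this show ?thesis by auto
qed

lemma l2_cnj:
  "is_l2 (\<lambda>x. cnj (v x)) = is_l2 v" "l2norm (\<lambda>x. cnj (v x)) = l2norm v"
  by (simp_all add: is_l2_def l2norm_def)

lemma l2_restrict:
  assumes "is_l2 v"
  shows "is_l2 (\<lambda>x. if x \<in> F then v x else 0) \<and> l2norm (\<lambda>x. if x \<in> F then v x else 0) \<le> l2norm v"
proof (rule l2I)
  fix G :: "'a set" assume "finite G"
  have "L2_set (\<lambda>x. cmod (if x \<in> F then v x else 0)) G \<le> L2_set (\<lambda>x. cmod (v x)) G"
    by (rule L2_set_mono) auto
  then show "L2_set (\<lambda>x. cmod (if x \<in> F then v x else 0)) G \<le> l2norm v"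
    using l2_finite_le[OF assms] order_trans by blast
qed

definition delta :: "'a \<Rightarrow> 'a \<Rightarrow> complex" where
  "delta a = (\<lambda>x. if x = a then 1 else 0)"

lemma infsum_single:
  "(\<lambda>x. if x = a then c else 0) summable_on A" "a \<in> A \<Longrightarrow> (\<Sum>\<^sub>\<infinity>x\<in>A. if x = a then c else (0::'b::{comm_monoid_add,t2_space})) = c"
proof -
  show "(\<lambda>x. if x = a then c else 0) summable_on A"
    by (subst summable_on_cong_neutral[where T="{a} \<inter> A" and g="\<lambda>x. c"]) auto
  show "a \<in> A \<Longrightarrow> (\<Sum>\<^sub>\<infinity>x\<in>A. if x = a then c else 0) = c"
    by (subst infsum_cong_neutral[where T="{a}" and g="\<lambda>x. c"]) auto
qed

lemma l2_delta: "is_l2 (delta a) \<and> l2norm (delta a) \<le> 1"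
proof (rule l2I)
  fix F :: "'a set" assume "finite F"
  have "(\<Sum>x\<in>F. (cmod (delta a x))\<^sup>2) = (\<Sum>x\<in>F \<inter> {a}. 1)"
    using \<open>finite F\<close> by (intro sum.mono_neutral_cong_right) (auto simp: delta_def)
  also have "\<dots> \<le> 1" by (cases "a \<in> F") auto
  finally show "L2_set (\<lambda>x. cmod (delta a x)) F \<le> 1" unfolding L2_set_def by simp
qed



lemma infsum_sum_fin:
  fixes f :: "'i \<Rightarrow> 'a \<Rightarrow> complex"
  assumes "finite F" "\<And>i. i \<in> F \<Longrightarrow> f i summable_on A"
  shows "(\<lambda>y. \<Sum>i\<in>F. f i y) summable_on A \<and> (\<Sum>\<^sub>\<infinity>y\<in>A. \<Sum>i\<in>F. f i y) = (\<Sum>i\<in>F. infsum (f i) A)"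
  using assms
proof (induction F rule: finite_induct)
  case empty
  then show ?case by simp
next
  case (insert j F)
  then have IH: "(\<lambda>y. \<Sum>i\<in>F. f i y) summable_on A \<and> (\<Sum>\<^sub>\<infinity>y\<in>A. \<Sum>i\<in>F. f i y) = (\<Sum>i\<in>F. infsum (f i) A)"
    by auto
  have fj: "f j summable_on A" using insert by auto
  show ?case using insert IH fj
    by (simp add: summable_on_add infsum_add)
qed

lemma infsum_diff':
  fixes f g :: "'a \<Rightarrow> complex"
  assumes "f summable_on A" "g summable_on A"
  shows "(\<lambda>x. f x - g x) summable_on A \<and> (\<Sum>\<^sub>\<infinity>x\<in>A. f x - g x) = infsum f A - infsum g A"
proof -
  have g': "(\<lambda>x. - g x) summable_on A" using assms(2) by (simp add: summable_on_uminus)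
  show ?thesis using summable_on_add[OF assms(1) g'] infsum_add[OF assms(1) g'] infsum_uminus[of g A]
    by simp
qed

lemma bounded_C:
  fixes T :: "'b \<Rightarrow> 'a \<Rightarrow> complex"
  assumes "bounded_mat T"
  obtains C where "C \<ge> 0" "\<And>v. is_l2 v \<Longrightarrow> (\<forall>y. (\<lambda>x. T y x * v x) summable_on UNIV) \<and>
      is_l2 (mat_apply T v) \<and> l2norm (mat_apply T v) \<le> C * l2norm v"
proof -
  obtain C where C: "\<And>v. is_l2 v \<Longrightarrow> (\<forall>y. (\<lambda>x. T y x * v x) summable_on UNIV) \<and>
      is_l2 (mat_apply T v) \<and> l2norm (mat_apply T v) \<le> C * l2norm v"
    using assms unfolding bounded_mat_def by blast
  show ?thesis
  proof (rule that[of "max C 0"])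
    fix v :: "'a \<Rightarrow> complex" assume v: "is_l2 v"
    have "C * l2norm v \<le> max C 0 * l2norm v"
      by (intro mult_right_mono) (auto simp: l2norm_nonneg)
    then show "(\<forall>y. (\<lambda>x. T y x * v x) summable_on UNIV) \<and>
      is_l2 (mat_apply T v) \<and> l2norm (mat_apply T v) \<le> max C 0 * l2norm v"
      using C[OF v] by auto
  qed auto
qed

lemma mat_apply_delta: "mat_apply T (delta a) = (\<lambda>y. T y a)"
proof
  fix y
  have "(\<lambda>x. T y x * delta a x) = (\<lambda>x. if x = a then T y a else 0)"
    by (auto simp: delta_def)
  then show "mat_apply T (delta a) y = T y a"
    unfolding mat_apply_def using infsum_single(2)[of a UNIV "T y a"] by simp
qed

lemma col_l2:
  fixes T :: "'b \<Rightarrow> 'a \<Rightarrow> complex"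
  assumes "bounded_mat T"
  obtains C where "C \<ge> 0" "\<And>a. is_l2 (\<lambda>y. T y a) \<and> l2norm (\<lambda>y. T y a) \<le> C"
proof -
  obtain C where C: "C \<ge> 0" "\<And>v. is_l2 v \<Longrightarrow> (\<forall>y. (\<lambda>x. T y x * v x) summable_on UNIV) \<and>
      is_l2 (mat_apply T v) \<and> l2norm (mat_apply T v) \<le> C * l2norm v"
    using bounded_C[OF assms] by blast
  show ?thesis
  proof (rule that[OF C(1)])
    fix a :: 'a
    have "C * l2norm (delta a) \<le> C * 1" using l2_delta[of a] C(1) by (intro mult_left_mono) auto
    then show "is_l2 (\<lambda>y. T y a) \<and> l2norm (\<lambda>y. T y a) \<le> C"
      using C(2)[of "delta a"] l2_delta[of a] by (simp add: mat_apply_delta)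
  qed
qed

lemma opnorm_col:
  fixes M :: "'b \<Rightarrow> 'a \<Rightarrow> complex"
  assumes "bounded_mat M"
  shows "l2norm (\<lambda>y. M y a) \<le> opnorm M"
proof -
  obtain C where C: "C \<ge> 0" "\<And>v. is_l2 v \<Longrightarrow> (\<forall>y. (\<lambda>x. M y x * v x) summable_on UNIV) \<and>
      is_l2 (mat_apply M v) \<and> l2norm (mat_apply M v) \<le> C * l2norm v"
    using bounded_C[OF assms] by blast
  have bdd: "bdd_above {l2norm (mat_apply M v) | v. is_l2 v \<and> l2norm v \<le> 1}"
  proof (rule bdd_aboveI, safe)
    fix v :: "'a \<Rightarrow> complex" assume "is_l2 v" "l2norm v \<le> 1"
    then have "l2norm (mat_apply M v) \<le> C * l2norm v" "C * l2norm v \<le> C * 1"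
      using C(2) apply blast using \<open>l2norm v \<le> 1\<close> C(1) by (rule mult_left_mono)
    then show "l2norm (mat_apply M v) \<le> C" by simp
  qed
  have "l2norm (mat_apply M (delta a)) \<in> {l2norm (mat_apply M v) | v. is_l2 v \<and> l2norm v \<le> 1}"
    using l2_delta[of a] by blast
  then have "l2norm (mat_apply M (delta a)) \<le> opnorm M"
    unfolding opnorm_def using bdd by (rule cSup_upper)
  then show ?thesis by (simp add: mat_apply_delta)
qed

lemma entry_le: "is_l2 w \<Longrightarrow> cmod (w y) \<le> l2norm w"
  using l2_finite_le[of w "{y}"] by (simp add: L2_set_def)

lemma bounded_add:
  fixes A B :: "'a \<Rightarrow> 'b \<Rightarrow> complex"
  assumes "bounded_mat A" "bounded_mat B"
  shows "bounded_mat (\<lambda>y x. A y x + B y x)"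
proof -
  obtain C1 where C1: "C1 \<ge> 0" "\<And>v. is_l2 v \<Longrightarrow> (\<forall>y. (\<lambda>x. A y x * v x) summable_on UNIV) \<and>
      is_l2 (mat_apply A v) \<and> l2norm (mat_apply A v) \<le> C1 * l2norm v"
    using bounded_C[OF assms(1)] by blast
  obtain C2 where C2: "C2 \<ge> 0" "\<And>v. is_l2 v \<Longrightarrow> (\<forall>y. (\<lambda>x. B y x * v x) summable_on UNIV) \<and>
      is_l2 (mat_apply B v) \<and> l2norm (mat_apply B v) \<le> C2 * l2norm v"
    using bounded_C[OF assms(2)] by blast
  show ?thesis unfolding bounded_mat_def
  proof (intro exI allI impI conjI)
    fix v :: "'b \<Rightarrow> complex" assume v: "is_l2 v"
    have e: "mat_apply (\<lambda>y x. A y x + B y x) v = (\<lambda>y. mat_apply A v y + mat_apply B v y)"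
      unfolding mat_apply_def using C1(2)[OF v] C2(2)[OF v]
      by (auto simp: distrib_right infsum_add)
    fix y
    show "(\<lambda>x. (A y x + B y x) * v x) summable_on UNIV"
      using C1(2)[OF v] C2(2)[OF v] by (auto simp: distrib_right intro: summable_on_add)
  next
    fix v :: "'b \<Rightarrow> complex" assume v: "is_l2 v"
    have e: "mat_apply (\<lambda>y x. A y x + B y x) v = (\<lambda>y. mat_apply A v y + mat_apply B v y)"
      unfolding mat_apply_def using C1(2)[OF v] C2(2)[OF v]
      by (auto simp: distrib_right infsum_add)
    note l = l2_add[of "mat_apply A v" "mat_apply B v"]
    show "is_l2 (mat_apply (\<lambda>y x. A y x + B y x) v)" using l C1(2)[OF v] C2(2)[OF v] e by simp
    have "l2norm (mat_apply (\<lambda>y x. A y x + B y x) v) \<le> C1 * l2norm v + C2 * l2norm v"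
      using l C1(2)[OF v] C2(2)[OF v] e by simp
    then show "l2norm (mat_apply (\<lambda>y x. A y x + B y x) v) \<le> (C1 + C2) * l2norm v"
      by (simp add: distrib_right)
  qed
qed

lemma bounded_scale:
  fixes A :: "'a \<Rightarrow> 'b \<Rightarrow> complex"
  assumes "bounded_mat A"
  shows "bounded_mat (\<lambda>y x. c * A y x)"
proof -
  obtain C1 where C1: "C1 \<ge> 0" "\<And>v. is_l2 v \<Longrightarrow> (\<forall>y. (\<lambda>x. A y x * v x) summable_on UNIV) \<and>
      is_l2 (mat_apply A v) \<and> l2norm (mat_apply A v) \<le> C1 * l2norm v"
    using bounded_C[OF assms(1)] by blast
  show ?thesis unfolding bounded_mat_def
  proof (intro exI allI impI conjI)
    fix v :: "'b \<Rightarrow> complex" assume v: "is_l2 v"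
    fix y
    show "(\<lambda>x. c * A y x * v x) summable_on UNIV"
      using C1(2)[OF v] summable_on_cmult_right[of "\<lambda>x. A y x * v x" UNIV c] by (simp add: mult.assoc)
  next
    fix v :: "'b \<Rightarrow> complex" assume v: "is_l2 v"
    have e: "mat_apply (\<lambda>y x. c * A y x) v = (\<lambda>y. c * mat_apply A v y)"
      unfolding mat_apply_def using C1(2)[OF v]
      by (auto simp: mult.assoc infsum_cmult_right)
    note l = l2_scale[of "mat_apply A v" c]
    show "is_l2 (mat_apply (\<lambda>y x. c * A y x) v)" using l C1(2)[OF v] e by simp
    have "l2norm (mat_apply (\<lambda>y x. c * A y x) v) \<le> cmod c * (C1 * l2norm v)"
      using l C1(2)[OF v] e by (metis mult_left_mono norm_ge_zero order_trans)
    then show "l2norm (mat_apply (\<lambda>y x. c * A y x) v) \<le> (cmod c * C1) * l2norm v"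
      by (simp add: mult.assoc)
  qed
qed

lemma bounded_diff:
  assumes "bounded_mat A" "bounded_mat B"
  shows "bounded_mat (mat_diff A B)"
proof -
  have "bounded_mat (\<lambda>y x. A y x + (-1) * B y x)"
    by (intro bounded_add bounded_scale assms)
  then show ?thesis unfolding mat_diff_def by simp
qed

lemma bounded_zero: "bounded_mat (\<lambda>y x. 0)"
  unfolding bounded_mat_def mat_apply_def
  by (rule exI[of _ 0]) (auto simp: is_l2_def l2norm_def)

lemma bounded_lincomb:
  fixes n :: nat
  assumes "\<And>i. i < n \<Longrightarrow> bounded_mat (A i)"
  shows "bounded_mat (\<lambda>y x. \<Sum>i<n. c i * A i y x)"
  using assms
proof (induction n)
  case 0
  then show ?case using bounded_zero by simp
next
  case (Suc n)
  have "bounded_mat (\<lambda>y x. (\<Sum>i<n. c i * A i y x) + c n * A n y x)"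
    using Suc by (intro bounded_add bounded_scale) auto
  then show ?case by simp
qed



definition adjv :: "('b \<Rightarrow> 'a \<Rightarrow> complex) \<Rightarrow> ('b \<Rightarrow> complex) \<Rightarrow> ('a \<Rightarrow> complex)" where
  "adjv S w = (\<lambda>x. \<Sum>\<^sub>\<infinity>y. cnj (S y x) * w y)"

lemma adj_summ:
  fixes S :: "'b \<Rightarrow> 'a \<Rightarrow> complex"
  assumes "bounded_mat S" "is_l2 w"
  shows "(\<lambda>y. cnj (S y x) * w y) summable_on UNIV"
proof -
  obtain C where "C \<ge> 0" "\<And>a. is_l2 (\<lambda>y. S y a) \<and> l2norm (\<lambda>y. S y a) \<le> C"
    using col_l2[OF assms(1)] by blast
  then have "is_l2 (\<lambda>y. cnj (S y x))" by (simp add: l2_cnj)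
  then show ?thesis using CS2(1) assms(2) by blast
qed

lemma mat_apply_fin:
  fixes S :: "'b \<Rightarrow> 'a \<Rightarrow> complex"
  assumes "finite F"
  shows "mat_apply S (\<lambda>x. if x \<in> F then v x else 0) y = (\<Sum>x\<in>F. S y x * v x)"
proof -
  have "(\<Sum>\<^sub>\<infinity>x. S y x * (if x \<in> F then v x else 0)) = (\<Sum>\<^sub>\<infinity>x\<in>F. S y x * v x)"
    by (rule infsum_cong_neutral) auto
  then show ?thesis unfolding mat_apply_def using assms by simp
qed

lemma l2_restrict_le:
  "is_l2 (\<lambda>x. if x \<in> F then u x else 0) \<and> l2norm (\<lambda>x. if x \<in> F then u x else 0) \<le> L2_set (\<lambda>x. cmod (u x)) F"
  if "finite F"
proof -
  show ?thesis
  proof (rule l2I)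
    fix G :: "'a set" assume G: "finite G"
    have "(\<Sum>x\<in>G. (cmod (if x \<in> F then u x else 0))\<^sup>2) = (\<Sum>x\<in>G \<inter> F. (cmod (u x))\<^sup>2)"
      using G by (intro sum.mono_neutral_cong_right) auto
    also have "\<dots> \<le> (\<Sum>x\<in>F. (cmod (u x))\<^sup>2)"
      using that by (intro sum_mono2) auto
    finally show "L2_set (\<lambda>x. cmod (if x \<in> F then u x else 0)) G \<le> L2_set (\<lambda>x. cmod (u x)) F"
      unfolding L2_set_def by (rule real_sqrt_le_mono)
  qed
qed

lemma cnj_mult_self: "cnj z * z = (complex_of_real (cmod z))\<^sup>2"
  by (metis complex_norm_square mult.commute of_real_power)

lemma adj_bound:
  fixes S :: "'b \<Rightarrow> 'a \<Rightarrow> complex"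
  assumes S: "bounded_mat S" and C: "C \<ge> 0" "\<And>v. is_l2 v \<Longrightarrow> (\<forall>y. (\<lambda>x. S y x * v x) summable_on UNIV) \<and>
      is_l2 (mat_apply S v) \<and> l2norm (mat_apply S v) \<le> C * l2norm v"
    and w: "is_l2 w"
  shows "is_l2 (adjv S w) \<and> l2norm (adjv S w) \<le> C * l2norm w"
proof (rule l2I)
  fix F :: "'a set" assume F: "finite F"
  define u where "u = adjv S w"
  define vF where "vF = (\<lambda>x. if x \<in> F then u x else 0)"
  define N where "N = L2_set (\<lambda>x. cmod (u x)) F"
  have N0: "N \<ge> 0" unfolding N_def by simp
  have vF: "is_l2 vF" "l2norm vF \<le> N"
    unfolding vF_def N_def using l2_restrict_le[OF F, of u] by auto
  have "complex_of_real (N\<^sup>2) = (\<Sum>x\<in>F. cnj (u x) * u x)"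
    unfolding N_def L2_set_def by (simp add: sum_nonneg cnj_mult_self)
  also have "\<dots> = (\<Sum>x\<in>F. \<Sum>\<^sub>\<infinity>y. cnj (u x) * (cnj (S y x) * w y))"
    by (intro sum.cong refl) (simp add: u_def adjv_def infsum_cmult_right adj_summ[OF S w])
  also have "\<dots> = (\<Sum>\<^sub>\<infinity>y. \<Sum>x\<in>F. cnj (u x) * (cnj (S y x) * w y))"
    using infsum_sum_fin[OF F, of "\<lambda>x y. cnj (u x) * (cnj (S y x) * w y)" UNIV]
      adj_summ[OF S w] by (simp add: summable_on_cmult_right)
  also have "\<dots> = (\<Sum>\<^sub>\<infinity>y. w y * cnj (mat_apply S vF y))"
    by (intro infsum_cong) (simp add: vF_def mat_apply_fin[OF F] sum_distrib_left mult_ac)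
  finally have eq: "complex_of_real (N\<^sup>2) = (\<Sum>\<^sub>\<infinity>y. w y * cnj (mat_apply S vF y))" .
  have SvF: "is_l2 (mat_apply S vF)" "l2norm (mat_apply S vF) \<le> C * l2norm vF"
    using C(2)[OF vF(1)] by auto
  have "N\<^sup>2 = cmod (complex_of_real (N\<^sup>2))" by (simp only: norm_of_real) simp
  also have "\<dots> \<le> l2norm w * l2norm (\<lambda>y. cnj (mat_apply S vF y))"
    unfolding eq by (rule CS2(2)[OF w]) (simp add: l2_cnj SvF)
  also have "\<dots> = l2norm w * l2norm (mat_apply S vF)" by (simp add: l2_cnj)
  also have "\<dots> \<le> l2norm w * (C * N)"
    using SvF(2) vF(2) C(1) by (intro mult_left_mono) (auto simp: l2norm_nonneg intro: order_trans mult_left_mono)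
  finally have "N * N \<le> (C * l2norm w) * N" by (simp add: power2_eq_square mult_ac)
  moreover have "0 \<le> C * l2norm w" using C(1) l2norm_nonneg[of w] by simp
  ultimately have "N \<le> C * l2norm w"
    using N0 by (cases "N = 0") (auto intro: mult_right_le_imp_le)
  then show "L2_set (\<lambda>x. cmod (adjv S w x)) F \<le> C * l2norm w" unfolding N_def u_def .
qed



lemma adj_pair:
  fixes S :: "'b \<Rightarrow> 'a \<Rightarrow> complex"
  assumes S: "bounded_mat S" and w: "is_l2 w" and v: "is_l2 v"
  shows "(\<Sum>\<^sub>\<infinity>x. cnj (adjv S w x) * v x) = (\<Sum>\<^sub>\<infinity>y. cnj (w y) * mat_apply S v y)"
proof -
  obtain C where C: "C \<ge> 0" "\<And>v. is_l2 v \<Longrightarrow> (\<forall>y. (\<lambda>x. S y x * v x) summable_on UNIV) \<and>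
      is_l2 (mat_apply S v) \<and> l2norm (mat_apply S v) \<le> C * l2norm v"
    using bounded_C[OF S] by blast
  define u where "u = adjv S w"
  have u: "is_l2 u" "l2norm u \<le> C * l2norm w"
    using adj_bound[OF S C w] unfolding u_def by auto
  have cu: "is_l2 (\<lambda>x. cnj (u x))" "l2norm (\<lambda>x. cnj (u x)) = l2norm u" using u by (auto simp: l2_cnj)
  have cw: "is_l2 (\<lambda>x. cnj (w x))" "l2norm (\<lambda>x. cnj (w x)) = l2norm w" using w by (auto simp: l2_cnj)
  define L where "L a = (\<Sum>\<^sub>\<infinity>x. cnj (u x) * a x)" for a
  define R where "R a = (\<Sum>\<^sub>\<infinity>y. cnj (w y) * mat_apply S a y)" for a
  have cux: "cnj (u x) = (\<Sum>\<^sub>\<infinity>y. S y x * cnj (w y))" for x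
  proof -
    have "cnj (u x) = (\<Sum>\<^sub>\<infinity>y. cnj (cnj (S y x) * w y))" unfolding u_def adjv_def
      by (simp only: infsum_cnj)
    then show ?thesis by (simp del: infsum_cnj)
  qed
  have sumy: "(\<lambda>y. S y x * cnj (w y)) summable_on UNIV" for x
  proof -
    have "(\<lambda>y. cnj (cnj (S y x) * w y)) summable_on UNIV"
      using adj_summ[OF S w, of x] by (simp only: summable_on_cnj_iff)
    then show ?thesis by simp
  qed
  have fin: "L (\<lambda>x. if x \<in> F then v x else 0) = R (\<lambda>x. if x \<in> F then v x else 0)" if F: "finite F" for F
  proof -
    have "L (\<lambda>x. if x \<in> F then v x else 0) = (\<Sum>\<^sub>\<infinity>x\<in>F. cnj (u x) * v x)"
      unfolding L_def by (rule infsum_cong_neutral) auto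
    also have "\<dots> = (\<Sum>x\<in>F. cnj (u x) * v x)" using F by simp
    finally have l: "L (\<lambda>x. if x \<in> F then v x else 0) = (\<Sum>x\<in>F. cnj (u x) * v x)" .
    have "R (\<lambda>x. if x \<in> F then v x else 0) = (\<Sum>\<^sub>\<infinity>y. \<Sum>x\<in>F. S y x * cnj (w y) * v x)"
      unfolding R_def by (simp add: mat_apply_fin[OF F] sum_distrib_left mult_ac)
    also have "\<dots> = (\<Sum>x\<in>F. \<Sum>\<^sub>\<infinity>y. S y x * cnj (w y) * v x)"
      using infsum_sum_fin[OF F, of "\<lambda>x y. S y x * cnj (w y) * v x" UNIV] sumy
      by (simp add: summable_on_cmult_left)
    also have "\<dots> = (\<Sum>x\<in>F. cnj (u x) * v x)"
      by (intro sum.cong refl) (simp add: cux infsum_cmult_left sumy)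
    finally show ?thesis using l by simp
  qed
  have Ladd: "L (\<lambda>x. a x + b x) = L a + L b" if "is_l2 a" "is_l2 b" for a b
    unfolding L_def using CS2(1)[OF cu(1) that(1)] CS2(1)[OF cu(1) that(2)]
    by (simp add: distrib_left infsum_add)
  have Sadd: "mat_apply S (\<lambda>x. a x + b x) = (\<lambda>y. mat_apply S a y + mat_apply S b y)"
    if "is_l2 a" "is_l2 b" for a b
    unfolding mat_apply_def using C(2)[OF that(1)] C(2)[OF that(2)]
    by (simp add: distrib_left infsum_add)
  have Radd: "R (\<lambda>x. a x + b x) = R a + R b" if "is_l2 a" "is_l2 b" for a b
    unfolding R_def Sadd[OF that]
    using CS2(1)[OF cw(1), of "mat_apply S a"] CS2(1)[OF cw(1), of "mat_apply S b"]
      C(2)[OF that(1)] C(2)[OF that(2)]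
    by (simp add: distrib_left infsum_add)
  have Lb: "cmod (L a) \<le> l2norm u * l2norm a" if "is_l2 a" for a
    unfolding L_def using CS2(2)[OF cu(1) that] cu(2) by simp
  have Rb: "cmod (R a) \<le> l2norm w * (C * l2norm a)" if "is_l2 a" for a
  proof -
    have "cmod (R a) \<le> l2norm w * l2norm (mat_apply S a)"
      unfolding R_def using CS2(2)[OF cw(1), of "mat_apply S a"] C(2)[OF that] cw(2) by simp
    also have "\<dots> \<le> l2norm w * (C * l2norm a)"
      using C(2)[OF that] by (intro mult_left_mono) (auto simp: l2norm_nonneg)
    finally show ?thesis .
  qed
  define K where "K = l2norm u + l2norm w * C"
  have K0: "K \<ge> 0" unfolding K_def using C(1) by (simp add: l2norm_nonneg)
  have main: "cmod (L v - R v) \<le> K * e" if e: "e > 0" for e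
  proof -
    have sv: "(\<lambda>x. (cmod (v x))\<^sup>2) summable_on UNIV" using v unfolding is_l2_def .
    obtain F where F: "finite F" "dist (\<Sum>x\<in>F. (cmod (v x))\<^sup>2) (\<Sum>\<^sub>\<infinity>x. (cmod (v x))\<^sup>2) \<le> e\<^sup>2"
      using infsum_finite_approximation[OF sv, of "e\<^sup>2"] e by auto
    define vF where "vF = (\<lambda>x. if x \<in> F then v x else 0)"
    define r where "r = (\<lambda>x. if x \<in> - F then v x else 0)"
    have vF: "is_l2 vF" unfolding vF_def using l2_restrict[OF v] by blast
    have r: "is_l2 r \<and> l2norm r \<le> e"
    proof (unfold r_def, rule l2I)
      fix G :: "'a set" assume G: "finite G"
      have "(\<Sum>x\<in>G. (cmod (if x \<in> - F then v x else 0))\<^sup>2) = (\<Sum>x\<in>G - F. (cmod (v x))\<^sup>2)"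
        using G by (intro sum.mono_neutral_cong_right) auto
      also have "\<dots> = (\<Sum>x\<in>(G - F) \<union> F. (cmod (v x))\<^sup>2) - (\<Sum>x\<in>F. (cmod (v x))\<^sup>2)"
        using G F(1) by (subst sum.union_disjoint) auto
      also have "\<dots> \<le> (\<Sum>\<^sub>\<infinity>x. (cmod (v x))\<^sup>2) - (\<Sum>x\<in>F. (cmod (v x))\<^sup>2)"
        using G F(1) sv by (intro diff_right_mono finite_sum_le_infsum) auto
      also have "\<dots> \<le> e\<^sup>2" using F(2) by (simp add: dist_real_def)
      finally have "sqrt (\<Sum>x\<in>G. (cmod (if x \<in> - F then v x else 0))\<^sup>2) \<le> sqrt (e\<^sup>2)"
        by (rule real_sqrt_le_mono)
      then show "L2_set (\<lambda>x. cmod (if x \<in> - F then v x else 0)) G \<le> e"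
        unfolding L2_set_def using e by simp
    qed
    have vsplit: "v = (\<lambda>x. vF x + r x)" by (auto simp: vF_def r_def)
    have "L v - R v = (L vF - R vF) + (L r - R r)"
      using Ladd[OF vF conjunct1[OF r]] Radd[OF vF conjunct1[OF r]] vsplit
      by (metis add_diff_add)
    also have "L vF - R vF = 0" using fin[OF F(1)] by (simp add: vF_def)
    finally have "cmod (L v - R v) = cmod (L r - R r)" by simp
    also have "\<dots> \<le> cmod (L r) + cmod (R r)" by (rule norm_triangle_ineq4)
    also have "\<dots> \<le> l2norm u * l2norm r + l2norm w * (C * l2norm r)"
      using Lb Rb r by (intro add_mono) auto
    also have "\<dots> = K * l2norm r" unfolding K_def by (simp add: algebra_simps)
    also have "\<dots> \<le> K * e" using K0 r by (intro mult_left_mono) auto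
    finally show ?thesis .
  qed
  have "cmod (L v - R v) \<le> 0"
  proof (rule field_le_epsilon)
    fix e :: real assume e: "0 < e"
    have "cmod (L v - R v) \<le> K * (e / (K + 1))" using main[of "e / (K + 1)"] e K0 by simp
    also have "\<dots> \<le> e" using K0 e by (simp add: field_simps)
    finally show "cmod (L v - R v) \<le> 0 + e" by simp
  qed
  then have "L v = R v" by simp
  then show ?thesis unfolding L_def R_def u_def .
qed

lemma bounded_adj_comp:
  fixes T S :: "'b \<Rightarrow> 'a \<Rightarrow> complex"
  assumes T: "bounded_mat T" and S: "bounded_mat S"
  shows "bounded_mat (adj_comp T S)"
proof -
  obtain CT where CT: "CT \<ge> 0" "\<And>v. is_l2 v \<Longrightarrow> (\<forall>y. (\<lambda>x. T y x * v x) summable_on UNIV) \<and>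
      is_l2 (mat_apply T v) \<and> l2norm (mat_apply T v) \<le> CT * l2norm v"
    using bounded_C[OF T] by blast
  obtain CS where CS: "CS \<ge> 0" "\<And>v. is_l2 v \<Longrightarrow> (\<forall>y. (\<lambda>x. S y x * v x) summable_on UNIV) \<and>
      is_l2 (mat_apply S v) \<and> l2norm (mat_apply S v) \<le> CS * l2norm v"
    using bounded_C[OF S] by blast
  obtain D where D: "D \<ge> 0" "\<And>a. is_l2 (\<lambda>y. T y a) \<and> l2norm (\<lambda>y. T y a) \<le> D"
    using col_l2[OF T] by blast
  have key: "adj_comp T S x' x = cnj (adjv S (\<lambda>y. T y x') x)" for x' x
  proof -
    have "(\<lambda>y. cnj (T y x') * S y x) = (\<lambda>y. cnj (cnj (S y x) * T y x'))" by (simp add: mult.commute)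
    then show ?thesis unfolding adj_comp_def adjv_def by (simp only: infsum_cnj)
  qed
  have ul2: "is_l2 (\<lambda>x. cnj (adjv S (\<lambda>y. T y x') x))" for x'
    using adj_bound[OF S CS D(2)[of x', THEN conjunct1]] by (simp add: l2_cnj)
  show ?thesis unfolding bounded_mat_def
  proof (intro exI allI impI conjI)
    fix v :: "'a \<Rightarrow> complex" and x' :: 'a assume v: "is_l2 v"
    show "(\<lambda>x. adj_comp T S x' x * v x) summable_on UNIV"
      unfolding key using CS2(1)[OF ul2 v] .
  next
    fix v :: "'a \<Rightarrow> complex" assume v: "is_l2 v"
    have Sv: "is_l2 (mat_apply S v)" "l2norm (mat_apply S v) \<le> CS * l2norm v" using CS(2)[OF v] by auto
    have eq: "mat_apply (adj_comp T S) v = adjv T (mat_apply S v)"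
    proof
      fix x'
      have "mat_apply (adj_comp T S) v x' = (\<Sum>\<^sub>\<infinity>x. cnj (adjv S (\<lambda>y. T y x') x) * v x)"
        unfolding mat_apply_def key ..
      also have "\<dots> = (\<Sum>\<^sub>\<infinity>y. cnj (T y x') * mat_apply S v y)"
        by (rule adj_pair[OF S D(2)[of x', THEN conjunct1] v])
      finally show "mat_apply (adj_comp T S) v x' = adjv T (mat_apply S v) x'"
        unfolding adjv_def .
    qed
    have A: "is_l2 (adjv T (mat_apply S v)) \<and> l2norm (adjv T (mat_apply S v)) \<le> CT * l2norm (mat_apply S v)"
      by (rule adj_bound[OF T CT Sv(1)])
    show "is_l2 (mat_apply (adj_comp T S) v)" using A eq by simp
    have "CT * l2norm (mat_apply S v) \<le> CT * (CS * l2norm v)"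
      using Sv(2) CT(1) by (rule mult_left_mono)
    then show "l2norm (mat_apply (adj_comp T S) v) \<le> (CT * CS) * l2norm v"
      using A eq by (simp add: mult.assoc)
  qed
qed



definition idm :: "'a \<Rightarrow> 'a \<Rightarrow> complex" where
  "idm = (\<lambda>y x. if y = x then 1 else 0)"

lemma mat_apply_idm: "mat_apply idm v = v"
proof
  fix y
  have "(\<lambda>x. idm y x * v x) = (\<lambda>x. if x = y then v y else 0)" by (auto simp: idm_def)
  then show "mat_apply idm v y = v y" unfolding mat_apply_def using infsum_single(2)[of y UNIV "v y"] by simp
qed

lemma bounded_idm: "bounded_mat idm"
  unfolding bounded_mat_def
proof (intro exI[of _ 1] allI impI conjI)
  fix v :: "'a \<Rightarrow> complex" and y :: 'a
  have "(\<lambda>x. idm y x * v x) = (\<lambda>x. if x = y then v y else 0)" by (auto simp: idm_def)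
  then show "(\<lambda>x. idm y x * v x) summable_on UNIV" using infsum_single(1) by metis
qed (auto simp: mat_apply_idm)

lemma opnorm_zero: "opnorm (\<lambda>(y::'b) (x::'a). 0::complex) = 0"
proof -
  have m: "mat_apply (\<lambda>(y::'b) (x::'a). 0::complex) v = (\<lambda>_. 0)" for v
    unfolding mat_apply_def by simp
  have l: "l2norm (\<lambda>_::'b. 0::complex) = 0" unfolding l2norm_def by simp
  have "{l2norm (mat_apply (\<lambda>(y::'b) (x::'a). 0::complex) v) | v. is_l2 v \<and> l2norm v \<le> 1} = {0}"
  proof
    show "{0} \<subseteq> {l2norm (mat_apply (\<lambda>(y::'b) (x::'a). 0::complex) v) | v. is_l2 v \<and> l2norm v \<le> 1}"
      using m l by (auto intro!: exI[of _ "\<lambda>_::'a. 0::complex"] simp: is_l2_def l2norm_def)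
  qed (auto simp: m l)
  then show ?thesis unfolding opnorm_def by simp
qed

lemma idm_roe:
  assumes "is_metric dX"
  shows "idm \<in> uniform_roe dX"
  unfolding uniform_roe_def roe_closure_def
proof (safe intro!: bounded_idm)
  fix e :: real assume e: "0 < e"
  have fp: "finite_prop dX idm" unfolding finite_prop_def
  proof (intro exI[of _ 1] allI impI)
    fix x y assume "1 \<le> dX x y"
    moreover have "dX y y = 0" using assms unfolding is_metric_def by auto
    ultimately have "x \<noteq> y" by auto
    then show "idm y x = 0" by (auto simp: idm_def)
  qed
  have md: "mat_diff (idm :: 'a \<Rightarrow> 'a \<Rightarrow> complex) idm = (\<lambda>y x. 0)" by (simp add: mat_diff_def)
  then show "\<exists>S. bounded_mat S \<and> finite_prop dX S \<and> opnorm (mat_diff idm S) < e"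
    using fp e bounded_idm opnorm_zero[where 'a='a and 'b='a] by (intro exI[of _ idm]) (simp add: md)
qed



theorem mainTheorem3:
  fixes dX :: "'a::countable \<Rightarrow> 'a \<Rightarrow> real"
    and dY :: "'b::countable \<Rightarrow> 'b \<Rightarrow> real"
    and d :: "('a + 'b) \<Rightarrow> ('a + 'b) \<Rightarrow> real"
  assumes "is_discrete_metric dX" and "is_discrete_metric dY"
    and "d \<in> coarse_metrics dX dY"
    and "full_module dX (M_d d)"
  shows "\<exists>L>0. \<exists>f :: 'a \<Rightarrow> 'b. \<forall>x. d (Inl x) (Inr (f x)) \<le> L"
proof (rule ccontr)
  assume neg: "\<not> (\<exists>L>0. \<exists>f :: 'a \<Rightarrow> 'b. \<forall>x. d (Inl x) (Inr (f x)) \<le> L)"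
  have met: "is_metric dX" using assms(1) unfolding is_discrete_metric_def by blast
  have fm: "\<forall>A\<in>uniform_roe dX. \<forall>e>0. \<exists>B\<in>inner_span (M_d d). opnorm (mat_diff A B) < e"
    using assms(4) unfolding full_module_def .
  have "\<exists>B\<in>inner_span (M_d d). opnorm (mat_diff idm B) < 1/2"
    by (rule fm[rule_format, OF idm_roe[OF met]]) simp
  then obtain B where B: "B \<in> inner_span (M_d d)" "opnorm (mat_diff idm B) < 1/2" by blast
  then obtain n :: nat and c T S where TS: "\<forall>i<n. T i \<in> M_d d \<and> S i \<in> M_d d"
    and Bdef: "B = (\<lambda>x' x. \<Sum>i<n. c i * adj_comp (T i) (S i) x' x)"
    unfolding inner_span_def by blast
  define \<rho> where "\<rho> = (\<lambda>x y. d (Inl x) (Inr y))"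
  have Md: "M_d d = roe_closure \<rho>" unfolding M_d_def \<rho>_def ..
  have bT: "bounded_mat (T i)" "bounded_mat (S i)" if "i < n" for i
    using TS that unfolding Md roe_closure_def by auto
  have bB: "bounded_mat B" unfolding Bdef
    by (rule bounded_lincomb) (auto intro: bounded_adj_comp bT)
  have bD: "bounded_mat (mat_diff idm B)" by (rule bounded_diff[OF bounded_idm bB])
  have diag: "cmod (B x x) > 1/2" for x
  proof -
    obtain Cc where Cc: "Cc \<ge> 0" "\<And>a. is_l2 (\<lambda>y. mat_diff idm B y a) \<and> l2norm (\<lambda>y. mat_diff idm B y a) \<le> Cc"
      using col_l2[OF bD] by blast
    have "cmod (mat_diff idm B x x) \<le> l2norm (\<lambda>y. mat_diff idm B y x)"
      by (rule entry_le[OF conjunct1[OF Cc(2)[of x]]])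
    also have "\<dots> \<le> opnorm (mat_diff idm B)" by (rule opnorm_col[OF bD])
    finally have "cmod (1 - B x x) < 1/2" using B(2) by (simp add: mat_diff_def idm_def)
    moreover have "1 \<le> cmod (1 - B x x) + cmod (B x x)"
      using norm_triangle_ineq[of "1 - B x x" "B x x"] by simp
    ultimately show ?thesis by linarith
  qed
  define sc where "sc = (\<Sum>i<n. cmod (c i))"
  have sc0: "sc \<ge> 0" unfolding sc_def by (simp add: sum_nonneg)
  define \<epsilon> where "\<epsilon> = 1 / (2 * (sc + 1))"
  have e0: "\<epsilon> > 0" unfolding \<epsilon>_def using sc0 by simp
  have "\<forall>i. \<exists>p. i < n \<longrightarrow> bounded_mat (fst p) \<and> (\<forall>x y. \<rho> x y \<ge> fst (snd p) \<longrightarrow> fst p y x = 0)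
      \<and> opnorm (mat_diff (T i) (fst p)) < \<epsilon>
      \<and> bounded_mat (fst (snd (snd p))) \<and> (\<forall>x y. \<rho> x y \<ge> snd (snd (snd p)) \<longrightarrow> fst (snd (snd p)) y x = 0)
      \<and> opnorm (mat_diff (S i) (fst (snd (snd p)))) < \<epsilon>"
  proof (intro allI)
    fix i
    show "\<exists>p. i < n \<longrightarrow> bounded_mat (fst p) \<and> (\<forall>x y. \<rho> x y \<ge> fst (snd p) \<longrightarrow> fst p y x = 0)
      \<and> opnorm (mat_diff (T i) (fst p)) < \<epsilon>
      \<and> bounded_mat (fst (snd (snd p))) \<and> (\<forall>x y. \<rho> x y \<ge> snd (snd (snd p)) \<longrightarrow> fst (snd (snd p)) y x = 0)
      \<and> opnorm (mat_diff (S i) (fst (snd (snd p)))) < \<epsilon>"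
    proof (cases "i < n")
      case True
      then have "T i \<in> roe_closure \<rho>" "S i \<in> roe_closure \<rho>" using TS unfolding Md by auto
      then obtain T1 S1 where T1: "bounded_mat T1" "finite_prop \<rho> T1" "opnorm (mat_diff (T i) T1) < \<epsilon>"
        and S1: "bounded_mat S1" "finite_prop \<rho> S1" "opnorm (mat_diff (S i) S1) < \<epsilon>"
        unfolding roe_closure_def using e0 by blast
      obtain L1 where L1: "\<forall>x y. \<rho> x y \<ge> L1 \<longrightarrow> T1 y x = 0" using T1(2) unfolding finite_prop_def by blast
      obtain L2 where L2: "\<forall>x y. \<rho> x y \<ge> L2 \<longrightarrow> S1 y x = 0" using S1(2) unfolding finite_prop_def by blast
      show ?thesis using T1 S1 L1 L2 by (intro exI[of _ "(T1, L1, S1, L2)"]) simp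
    qed simp
  qed
  from choice[OF this] obtain p where p: "\<And>i. i < n \<Longrightarrow> bounded_mat (fst (p i)) \<and> (\<forall>x y. \<rho> x y \<ge> fst (snd (p i)) \<longrightarrow> fst (p i) y x = 0)
      \<and> opnorm (mat_diff (T i) (fst (p i))) < \<epsilon>
      \<and> bounded_mat (fst (snd (snd (p i)))) \<and> (\<forall>x y. \<rho> x y \<ge> snd (snd (snd (p i))) \<longrightarrow> fst (snd (snd (p i))) y x = 0)
      \<and> opnorm (mat_diff (S i) (fst (snd (snd (p i))))) < \<epsilon>"
    by blast
  define R where "R = 1 + (\<Sum>i<n. \<bar>fst (snd (p i))\<bar> + \<bar>snd (snd (snd (p i)))\<bar>)"
  have R0: "R > 0" unfolding R_def by (simp add: sum_nonneg add_pos_nonneg)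
  have RL: "fst (snd (p i)) \<le> R" "snd (snd (snd (p i))) \<le> R" if "i < n" for i
  proof -
    have "\<bar>fst (snd (p i))\<bar> + \<bar>snd (snd (snd (p i)))\<bar> \<le> (\<Sum>i<n. \<bar>fst (snd (p i))\<bar> + \<bar>snd (snd (snd (p i)))\<bar>)"
      using that by (intro member_le_sum) auto
    then show "fst (snd (p i)) \<le> R" "snd (snd (snd (p i))) \<le> R" unfolding R_def by linarith+
  qed
  obtain x0 where x0: "\<forall>y. d (Inl x0) (Inr y) > R"
  proof -
    have "\<exists>x0. \<forall>y. d (Inl x0) (Inr y) > R"
    proof (rule ccontr)
      assume "\<not> (\<exists>x0. \<forall>y. d (Inl x0) (Inr y) > R)"
      then have "\<forall>x. \<exists>y. d (Inl x) (Inr y) \<le> R" by (auto simp: not_less)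
      from choice[OF this] obtain f where "\<forall>x. d (Inl x) (Inr (f x)) \<le> R" by blast
      then show False using neg R0 by blast
    qed
    then show ?thesis using that by blast
  qed
  have colsmall: "l2norm (\<lambda>y. T i y x0) < \<epsilon> \<and> l2norm (\<lambda>y. S i y x0) < \<epsilon> \<and> is_l2 (\<lambda>y. T i y x0) \<and> is_l2 (\<lambda>y. S i y x0)"
    if i: "i < n" for i
  proof -
    note pi = p[OF i]
    have z1: "fst (p i) y x0 = 0" for y
    proof -
      have "\<rho> x0 y \<ge> fst (snd (p i))" using RL(1)[OF i] x0 unfolding \<rho>_def
        by (smt (verit))
      then show ?thesis using pi by blast
    qed
    have z2: "fst (snd (snd (p i))) y x0 = 0" for y
    proof -
      have "\<rho> x0 y \<ge> snd (snd (snd (p i)))" using RL(2)[OF i] x0 unfolding \<rho>_def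
        by (smt (verit))
      then show ?thesis using pi by blast
    qed
    have c1: "(\<lambda>y. T i y x0) = (\<lambda>y. mat_diff (T i) (fst (p i)) y x0)" by (simp add: mat_diff_def z1)
    have c2: "(\<lambda>y. S i y x0) = (\<lambda>y. mat_diff (S i) (fst (snd (snd (p i)))) y x0)" by (simp add: mat_diff_def z2)
    have b1: "bounded_mat (mat_diff (T i) (fst (p i)))" using bT[OF i] pi by (intro bounded_diff) auto
    have b2: "bounded_mat (mat_diff (S i) (fst (snd (snd (p i)))))" using bT[OF i] pi by (intro bounded_diff) auto
    obtain C1 where "C1 \<ge> 0" "\<And>a. is_l2 (\<lambda>y. T i y a) \<and> l2norm (\<lambda>y. T i y a) \<le> C1"
      using col_l2[OF bT(1)[OF i]] by blast
    moreover obtain C2 where "C2 \<ge> 0" "\<And>a. is_l2 (\<lambda>y. S i y a) \<and> l2norm (\<lambda>y. S i y a) \<le> C2"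
      using col_l2[OF bT(2)[OF i]] by blast
    moreover have "l2norm (\<lambda>y. T i y x0) < \<epsilon>"
      using opnorm_col[OF b1, of x0] pi c1 by simp
    moreover have "l2norm (\<lambda>y. S i y x0) < \<epsilon>"
      using opnorm_col[OF b2, of x0] pi c2 by simp
    ultimately show ?thesis by blast
  qed
  have adjsmall: "cmod (adj_comp (T i) (S i) x0 x0) \<le> \<epsilon> * \<epsilon>" if i: "i < n" for i
  proof -
    note cs = colsmall[OF i]
    have "cmod (adj_comp (T i) (S i) x0 x0) \<le> l2norm (\<lambda>y. cnj (T i y x0)) * l2norm (\<lambda>y. S i y x0)"
      unfolding adj_comp_def by (rule CS2(2)) (use cs in \<open>auto simp: l2_cnj\<close>)
    also have "\<dots> \<le> \<epsilon> * \<epsilon>" using cs e0 by (intro mult_mono) (auto simp: l2_cnj l2norm_nonneg)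
    finally show ?thesis .
  qed
  have "cmod (B x0 x0) \<le> (\<Sum>i<n. cmod (c i * adj_comp (T i) (S i) x0 x0))"
    unfolding Bdef by (rule norm_sum)
  also have "\<dots> \<le> (\<Sum>i<n. cmod (c i) * (\<epsilon> * \<epsilon>))"
    by (intro sum_mono) (auto simp: norm_mult intro!: mult_left_mono adjsmall)
  also have "\<dots> = sc * (\<epsilon> * \<epsilon>)" unfolding sc_def by (simp add: sum_distrib_right)
  also have "\<dots> \<le> 1/4"
  proof -
    have "sc * (\<epsilon> * \<epsilon>) = sc / (4 * (sc + 1) * (sc + 1))" unfolding \<epsilon>_def by (simp add: field_simps)
    also have "\<dots> \<le> ((sc + 1) * (sc + 1)) / (4 * (sc + 1) * (sc + 1))"
      using sc0 by (intro divide_right_mono) (auto simp: algebra_simps)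
    also have "\<dots> = 1/4" using sc0 by simp
    finally show ?thesis .
  qed
  finally show False using diag[of x0] by simp
qed


end
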